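(* Let $n,r,k$ be positive integers with $n\ge 2(k+r)$, let $D$ be a minimum-cardinality $k$-dominating set of the Kneser graph $K(n,r)$, and let $\tilde u\subseteq [n]$ with $|\tilde u|=r-1$. Then there exists $x\in[n]\setminus\tilde u$ such that $\tilde u\cup\{x\}\notin D$.
   Context: For integers $n\ge 2r$, the Kneser graph $K(n,r)$ has as vertices the $r$-element subsets of $[n]=\{1,\dots,n\}$, two vertices being adjacent iff they are disjoint. For a graph $G$ and positive integer $k$, a set $D\subseteq V(G)$ is $k$-dominating if every vertex $u\in V(G)\setminus D$ has at least $k$ neighbors in $D$. *)

theory Defs
  imports Main
begin

definition kneser_vertices :: "nat \<Rightarrow> nat \<Rightarrow> nat set set" where
  "kneser_vertices n r = {A. A \<subseteq> {1..n} \<and> card A = r}"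

definition kneser_adj :: "nat set \<Rightarrow> nat set \<Rightarrow> bool" where
  "kneser_adj A B \<longleftrightarrow> A \<inter> B = {}"

definition kneser_k_dominating :: "nat \<Rightarrow> nat \<Rightarrow> nat \<Rightarrow> nat set set \<Rightarrow> bool" where
  "kneser_k_dominating n r k D \<longleftrightarrow>
     D \<subseteq> kneser_vertices n r \<and>
     (\<forall>u \<in> kneser_vertices n r - D. card {v \<in> D. kneser_adj u v} \<ge> k)"

definition kneser_min_k_dominating :: "nat \<Rightarrow> nat \<Rightarrow> nat \<Rightarrow> nat set set \<Rightarrow> bool" where
  "kneser_min_k_dominating n r k D \<longleftrightarrow>
     kneser_k_dominating n r k D \<and>
     (\<forall>D'. kneser_k_dominating n r k D' \<longrightarrow> card D \<le> card D')"

end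

theory Submission
  imports Defs
begin

theorem lemma2p2:
  fixes n r k :: nat and D :: "nat set set" and u :: "nat set"
  assumes "0 < n" "0 < r" "0 < k"
    and "n \<ge> 2 * (k + r)"
    and "kneser_min_k_dominating n r k D"
    and "u \<subseteq> {1..n}" "card u = r - 1"
  shows "\<exists>x \<in> {1..n} - u. insert x u \<notin> D"
proof (rule ccontr)
  assume "\<not> ?thesis"
  hence star: "\<And>x. x \<in> {1..n} - u \<Longrightarrow> insert x u \<in> D" by blast
  have dom: "kneser_k_dominating n r k D" and minD: "\<And>D'. kneser_k_dominating n r k D' \<Longrightarrow> card D \<le> card D'"
    using assms(5) unfolding kneser_min_k_dominating_def by auto
  have DV: "D \<subseteq> kneser_vertices n r" and Ddom: "\<And>v. v \<in> kneser_vertices n r - D \<Longrightarrow> card {w \<in> D. kneser_adj v w} \<ge> k"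
    using dom unfolding kneser_k_dominating_def by auto
  have finu: "finite u" using assms(6) finite_subset by blast
  have finV: "finite (kneser_vertices n r)"
    by (rule finite_subset[of _ "Pow {1..n}"]) (auto simp: kneser_vertices_def)
  have finD: "finite D" using DV finV finite_subset by blast
  define S where "S = {1..n} - u"
  have cS: "card S = n - (r - 1)" unfolding S_def using assms(6,7) finu
    by (simp add: card_Diff_subset)
  have finS: "finite S" unfolding S_def by simp
  obtain Y where Y: "Y \<subseteq> S" "card Y = k + 1" "finite Y"
  proof -
    have "k + 1 \<le> card S" using cS assms(2,3,4) by simp
    thus ?thesis using obtain_subset_with_card_n that by blast
  qed
  define C where "C = S - Y"
  have cC: "card C = n - (r - 1) - (k + 1)" unfolding C_def using Y cS by (simp add: card_Diff_subset)
  have finC: "finite C" unfolding C_def using finS by simp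
  obtain B where B: "B \<subseteq> C" "card B = r - 1" "finite B"
  proof -
    have "r - 1 \<le> card C" using cC assms(2,3,4) by simp
    thus ?thesis using obtain_subset_with_card_n that by blast
  qed
  have cCB: "card (C - B) = n - (r - 1) - (k + 1) - (r - 1)" using B cC by (simp add: card_Diff_subset)
  obtain E where E: "E \<subseteq> C - B" "card E = k" "finite E"
  proof -
    have "k \<le> card (C - B)" using cCB assms(2,3,4) by simp
    thus ?thesis using obtain_subset_with_card_n that by blast
  qed
  define f where "f x = insert x u" for x
  define g where "g c = insert c B" for c
  have injf: "inj_on f S" unfolding inj_on_def f_def S_def by blast
  have injg: "inj_on g (C - B)" unfolding inj_on_def g_def by blast
  define D' where "D' = (D - f ` Y) \<union> g ` E"
  have fYD: "f ` Y \<subseteq> D" using Y star unfolding f_def S_def by auto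
  have cfY: "card (f ` Y) = k + 1" using card_image[OF inj_on_subset[OF injf Y(1)]] Y by simp
  have cgE: "card (g ` E) = k" using card_image[OF inj_on_subset[OF injg E(1)]] E by simp
  have gV: "g ` E \<subseteq> kneser_vertices n r"
  proof
    fix w assume "w \<in> g ` E"
    then obtain c where c: "c \<in> E" "w = g c" by auto
    have "c \<in> C - B" using c E by auto
    moreover have "C \<subseteq> {1..n}" unfolding C_def S_def by auto
    ultimately show "w \<in> kneser_vertices n r"
      using c B assms(2) unfolding kneser_vertices_def g_def by auto
  qed
  have finD': "finite D'" unfolding D'_def using finD E by simp
  have D'dom: "kneser_k_dominating n r k D'"
    unfolding kneser_k_dominating_def
  proof (intro conjI ballI)
    show "D' \<subseteq> kneser_vertices n r" unfolding D'_def using DV gV by auto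
  next
    fix v assume v: "v \<in> kneser_vertices n r - D'"
    have finN: "finite {w \<in> D'. kneser_adj v w}" using finD' by simp
    show "k \<le> card {w \<in> D'. kneser_adj v w}"
    proof (cases "v \<in> f ` Y")
      case True
      then obtain y where y: "y \<in> Y" "v = f y" by auto
      have "g ` E \<subseteq> {w \<in> D'. kneser_adj v w}"
      proof
        fix w assume "w \<in> g ` E"
        then obtain c where c: "c \<in> E" "w = g c" by auto
        have "c \<in> C" "c \<notin> B" using c E by auto
        hence "c \<notin> u" "c \<noteq> y" using y(1) unfolding C_def S_def by auto
        moreover have "B \<inter> u = {}" "y \<notin> B" using B y(1) unfolding C_def S_def by auto
        ultimately show "w \<in> {w \<in> D'. kneser_adj v w}"
          using c y unfolding D'_def kneser_adj_def f_def g_def by auto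
      qed
      from card_mono[OF finN this] cgE show ?thesis by simp
    next
      case False
      hence vD: "v \<in> kneser_vertices n r - D" using v unfolding D'_def by auto
      have cv: "card v = r" "finite v" using v unfolding kneser_vertices_def
        using finite_subset[of v "{1..n}"] by auto
      show ?thesis
      proof (cases "v \<inter> u = {}")
        case True
        have sub: "f ` (C - v) \<subseteq> {w \<in> D'. kneser_adj v w}"
        proof
          fix w assume "w \<in> f ` (C - v)"
          then obtain x where x: "x \<in> C" "x \<notin> v" "w = f x" by auto
          have xS: "x \<in> S" "x \<notin> Y" using x unfolding C_def by auto
          have "w \<in> D" using star xS x unfolding f_def S_def by auto
          moreover have "w \<notin> f ` Y"
          proof
            assume "w \<in> f ` Y"
            then obtain y where "y \<in> Y" "f x = f y" using x by auto
            thus False using injf xS Y(1) unfolding inj_on_def by blast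
          qed
          moreover have "kneser_adj v w" using True x unfolding kneser_adj_def f_def by auto
          ultimately show "w \<in> {w \<in> D'. kneser_adj v w}" unfolding D'_def by auto
        qed
        have "card (f ` (C - v)) = card (C - v)"
          by (rule card_image, rule inj_on_subset[OF injf]) (auto simp: C_def)
        moreover have "card C - card v \<le> card (C - v)" using diff_card_le_card_Diff cv by blast
        ultimately have "card C - r \<le> card {w \<in> D'. kneser_adj v w}"
          using card_mono[OF finN sub] cv by simp
        moreover have "k \<le> card C - r" using cC assms(2,3,4) by simp
        ultimately show ?thesis by linarith
      next
        case False
        have "{w \<in> D. kneser_adj v w} \<subseteq> {w \<in> D'. kneser_adj v w}"
          using False unfolding D'_def kneser_adj_def f_def by auto
        from card_mono[OF finN this] Ddom[OF vD] show ?thesis by simp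
      qed
    qed
  qed
  have "card D' \<le> card (D - f ` Y) + card (g ` E)" unfolding D'_def by (rule card_Un_le)
  also have "card (D - f ` Y) = card D - (k + 1)"
    using card_Diff_subset[OF finite_subset[OF fYD finD] fYD] cfY by simp
  finally have "card D' < card D"
    using cgE card_mono[OF finD fYD] cfY by simp
  with minD[OF D'dom] show False by simp
qed

end
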